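(* Let $G=(V,E)$ be a finite, simple, connected graph with $|V|\geq 3$, let $\Gamma_3(G)=\{\mathcal{T}_1,\dots,\mathcal{T}_m\}$, and let $d\in\mathrm{Der}(\mathcal{A}(G))$ with $d(e_i)=\sum_{k\in V}d_{ik}e_k$. Then: (a) $d_{ii}=0$ for every $i\in V$; (b) for $i\neq j$, $d_{ij}=0$ unless $i$ and $j$ belong to the same class $\mathcal{T}_\ell\in\Gamma_3(G)$; (c) for $i\neq j$ in the same $\mathcal{T}_\ell$, $d_{ij}=-d_{ji}$; (d) for each $\ell\in\{1,\dots,m\}$ and each $i\in\mathcal{T}_\ell$, $\sum_{k\in\mathcal{T}_\ell}d_{ki}=0$. Equivalently, after a permutation of the basis listing the vertices of $\mathcal{T}_1$, then $\mathcal{T}_2$, ..., then $\mathcal{T}_m$, then the remaining vertices, the matrix $(d_{ij})$ is block diagonal with diagonal blocks $A_1(d),\dots,A_m(d),\mathbf{0}$, where each $A_\ell(d)$ is a $|\mathcal{T}_\ell|\times|\mathcal{T}_\ell|$ skew-symmetric matrix with zero diagonal (of the form $U-U^T$ with $U$ strictly upper triangular) satisfying the column-sum condition (d), and all other entries are zero. If $\Gamma_3(G)=\emptyset$ this reduces to $d=0$.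
   Context: Throughout, $\mathbb{K}$ is a field of characteristic $0$. A graph $G=(V,E)$ has vertex set $V=\{1,\dots,n\}$ and is assumed finite, simple (no loops, no multiple edges) and connected. $\mathcal{N}(i)$ denotes the set of neighbors of vertex $i$, $\deg(i)=|\mathcal{N}(i)|$, and $(a_{ij})$ is the adjacency matrix ($a_{ij}=1$ if $i,j$ are adjacent, $0$ otherwise). The evolution algebra $\mathcal{A}(G)$ is the $\mathbb{K}$-algebra with basis $\{e_i: i\in V\}$ and product $e_i\cdot e_i=\sum_{k\in V}a_{ik}e_k=\sum_{k\in\mathcal{N}(i)}e_k$ and $e_i\cdot e_j=0$ for $i\neq j$. A derivation of $\mathcal{A}(G)$ is a linear map $d:\mathcal{A}(G)\to\mathcal{A}(G)$ with $d(u\cdot v)=d(u)\cdot v+u\cdot d(v)$ for all $u,v$; $\mathrm{Der}(\mathcal{A}(G))$ is the space of derivations, and for $d$ in it we write $d(e_i)=\sum_{k\in V}d_{ik}e_k$. Two vertices $i,j$ are twins, written $i\sim_t j$, if $\mathcal{N}(i)=\mathcal{N}(j)$; this is an equivalence relation whose classes are called twin classes. $\Gamma_3(G)$ denotes the set of twin classes of $G$ having at least three vertices. *)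

theory Defs
  imports Main
begin

definition simple_graph :: "('v \<Rightarrow> 'v \<Rightarrow> bool) \<Rightarrow> bool" where
  "simple_graph E \<longleftrightarrow> (\<forall>i. \<not> E i i) \<and> (\<forall>i j. E i j \<longrightarrow> E j i)"

definition connected_graph :: "('v \<Rightarrow> 'v \<Rightarrow> bool) \<Rightarrow> bool" where
  "connected_graph E \<longleftrightarrow> (\<forall>i j. E\<^sup>*\<^sup>* i j)"

definition adj :: "('v \<Rightarrow> 'v \<Rightarrow> bool) \<Rightarrow> 'v \<Rightarrow> 'v \<Rightarrow> 'k::field_char_0" where
  "adj E i k = (if E i k then 1 else 0)"

text \<open>Elements of the evolution algebra A(G) are coordinate vectors
 u = sum_i u i e_i, i.e. functions 'v => 'k.  The product is the bilinear
 extension of e_i e_i = sum_k a_ik e_k, e_i e_j = 0 (i \<noteq> j).\<close>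

definition evo_mult :: "('v::finite \<Rightarrow> 'v \<Rightarrow> bool) \<Rightarrow> ('v \<Rightarrow> 'k::field_char_0) \<Rightarrow> ('v \<Rightarrow> 'k) \<Rightarrow> ('v \<Rightarrow> 'k)" where
  "evo_mult E u w = (\<lambda>k. \<Sum>i\<in>UNIV. u i * w i * adj E i k)"

text \<open>The linear map with matrix D, i.e. d(e_i) = sum_k D i k e_k.\<close>

definition lin_of_mat :: "('v::finite \<Rightarrow> 'v \<Rightarrow> 'k::field_char_0) \<Rightarrow> ('v \<Rightarrow> 'k) \<Rightarrow> ('v \<Rightarrow> 'k)" where
  "lin_of_mat D u = (\<lambda>k. \<Sum>i\<in>UNIV. u i * D i k)"

text \<open>D is the matrix of a derivation of A(G).  Every linear map of the
 finite-dimensional space A(G) is lin_of_mat D for a unique D.\<close>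

definition is_derivation :: "('v::finite \<Rightarrow> 'v \<Rightarrow> bool) \<Rightarrow> ('v \<Rightarrow> 'v \<Rightarrow> 'k::field_char_0) \<Rightarrow> bool" where
  "is_derivation E D \<longleftrightarrow>
     (\<forall>u w. lin_of_mat D (evo_mult E u w) =
            (\<lambda>k. evo_mult E (lin_of_mat D u) w k + evo_mult E u (lin_of_mat D w) k))"

definition twins :: "('v \<Rightarrow> 'v \<Rightarrow> bool) \<Rightarrow> 'v \<Rightarrow> 'v \<Rightarrow> bool" where
  "twins E i j \<longleftrightarrow> {k. E i k} = {k. E j k}"

definition twin_class :: "('v \<Rightarrow> 'v \<Rightarrow> bool) \<Rightarrow> 'v \<Rightarrow> 'v set" where
  "twin_class E i = {j. twins E i j}"

definition Gamma3 :: "('v \<Rightarrow> 'v \<Rightarrow> bool) \<Rightarrow> 'v set set" where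
  "Gamma3 E = {T. (\<exists>i. T = twin_class E i) \<and> card T \<ge> 3}"

end

theory Submission
  imports Defs
begin

definition bvec :: "'v \<Rightarrow> 'v \<Rightarrow> 'k::field_char_0" where
  "bvec i = (\<lambda>x. if x = i then 1 else 0)"

lemma sum_bvec: "(\<Sum>x\<in>UNIV. bvec (i::'v::finite) x * f x) = (f i :: 'k::field_char_0)"
proof -
  have "(\<Sum>x\<in>UNIV. bvec i x * f x) = (\<Sum>x\<in>UNIV. if x = i then f x else 0)"
    by (rule sum.cong) (auto simp: bvec_def)
  then show ?thesis by simp
qed

lemma lin_bvec: "lin_of_mat D (bvec i) = (\<lambda>k. D i k)"
  unfolding lin_of_mat_def by (simp add: sum_bvec)

lemma evo_bvec_r: "evo_mult E u (bvec j) = (\<lambda>k. u j * adj E j k)"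
proof
  fix k
  have "(\<Sum>x\<in>UNIV. u x * bvec j x * adj E x k) = (\<Sum>x\<in>UNIV. bvec j x * (u x * adj E x k))"
    by (rule sum.cong) (simp_all add: algebra_simps)
  then show "evo_mult E u (bvec j) k = u j * adj E j k" unfolding evo_mult_def by (simp add: sum_bvec)
qed

lemma evo_bvec_l: "evo_mult E (bvec i) w = (\<lambda>k. w i * adj E i k)"
proof
  fix k
  have "(\<Sum>x\<in>UNIV. bvec i x * w x * adj E x k) = (\<Sum>x\<in>UNIV. bvec i x * (w x * adj E x k))"
    by (rule sum.cong) (simp_all add: algebra_simps)
  then show "evo_mult E (bvec i) w k = w i * adj E i k" unfolding evo_mult_def by (simp add: sum_bvec)
qed

lemma der_eq:
  assumes "is_derivation E D"
  shows "lin_of_mat D (evo_mult E (bvec i) (bvec j)) k = D i j * adj E j k + D j i * adj E i k"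
proof -
  have "lin_of_mat D (evo_mult E (bvec i) (bvec j)) =
     (\<lambda>k. evo_mult E (lin_of_mat D (bvec i)) (bvec j) k + evo_mult E (bvec i) (lin_of_mat D (bvec j)) k)"
    using assms unfolding is_derivation_def by blast
  then show ?thesis by (simp add: lin_bvec evo_bvec_r evo_bvec_l)
qed

lemma der_off:
  fixes D :: "'v::finite \<Rightarrow> 'v \<Rightarrow> 'k::field_char_0"
  assumes "is_derivation E D" "i \<noteq> j"
  shows "D i j * adj E j k + D j i * adj E i k = 0"
proof -
  have "evo_mult E (bvec i) (bvec j) = (\<lambda>k. 0::'k)"
    using assms(2) unfolding evo_bvec_r by (simp add: bvec_def)
  then have "lin_of_mat D (evo_mult E (bvec i) (bvec j)) k = 0"
    by (simp add: lin_of_mat_def)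
  then show ?thesis using der_eq[OF assms(1)] by metis
qed

lemma der_diag:
  fixes D :: "'v::finite \<Rightarrow> 'v \<Rightarrow> 'k::field_char_0"
  assumes "is_derivation E D"
  shows "(\<Sum>x\<in>UNIV. adj E i x * D x l) = 2 * D i i * adj E i l"
proof -
  have "evo_mult E (bvec i) (bvec i) = (\<lambda>k. adj E i k :: 'k)"
    unfolding evo_bvec_r by (simp add: bvec_def)
  then have "lin_of_mat D (evo_mult E (bvec i) (bvec i)) l = (\<Sum>x\<in>UNIV. adj E i x * D x l)"
    by (simp add: lin_of_mat_def)
  then show ?thesis using der_eq[OF assms, of i i l] by (simp add: algebra_simps)
qed

theorem theorem2p2:
  fixes E :: "'v::finite \<Rightarrow> 'v \<Rightarrow> bool"
    and D :: "'v \<Rightarrow> 'v \<Rightarrow> 'k::field_char_0"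
  assumes "simple_graph E"
    and "connected_graph E"
    and "card (UNIV :: 'v set) \<ge> 3"
    and "is_derivation E D"
  shows "(\<forall>i. D i i = 0)
       \<and> (\<forall>i j. i \<noteq> j \<and> \<not> (\<exists>T\<in>Gamma3 E. i \<in> T \<and> j \<in> T) \<longrightarrow> D i j = 0)
       \<and> (\<forall>T\<in>Gamma3 E. \<forall>i\<in>T. \<forall>j\<in>T. i \<noteq> j \<longrightarrow> D i j = - D j i)
       \<and> (\<forall>T\<in>Gamma3 E. \<forall>i\<in>T. (\<Sum>k\<in>T. D k i) = 0)"
proof -
  have sym: "E a b \<Longrightarrow> E b a" for a b using assms(1) unfolding simple_graph_def by blast
  have nb: "\<exists>b. E a b" for a
  proof -
    have "UNIV \<noteq> {a}" using assms(3) by (metis card.empty card.insert empty_iff finite.intros(1) numeral_le_one_iff semiring_norm(70) One_nat_def)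
    then obtain b where "b \<noteq> a" by blast
    moreover have "E\<^sup>*\<^sup>* a b" using assms(2) unfolding connected_graph_def by blast
    ultimately show ?thesis by (metis converse_rtranclpE)
  qed
  have adj1: "E a b \<Longrightarrow> adj E a b = (1::'k)" for a b by (simp add: adj_def)
  have adj0: "\<not> E a b \<Longrightarrow> adj E a b = (0::'k)" for a b by (simp add: adj_def)
  have off: "i \<noteq> j \<Longrightarrow> D i j * adj E j k + D j i * adj E i k = 0" for i j k
    using der_off[OF assms(4)] by blast
  have L: "D j i = 0 \<and> D i j = 0" if "i \<noteq> j" "E i k" "\<not> E j k" for i j k
  proof -
    have 1: "D j i = 0" using off[OF that(1), of k] that by (simp add: adj1 adj0)
    obtain k' where "E j k'" using nb by blast
    then have "D i j = 0" using off[OF that(1), of k'] 1 by (simp add: adj1)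
    with 1 show ?thesis by simp
  qed
  have twr: "twins E a a" for a by (simp add: twins_def)
  have tws: "twins E a b \<Longrightarrow> twins E b a" for a b by (simp add: twins_def)
  have twt: "twins E a b \<Longrightarrow> twins E b c \<Longrightarrow> twins E a c" for a b c by (simp add: twins_def)
  have twE: "twins E a b \<Longrightarrow> E a k \<Longrightarrow> E b k" for a b k by (auto simp: twins_def)
  have F1: "D i j = 0" if ij: "i \<noteq> j" and nt: "\<not> twins E i j" for i j
  proof -
    obtain k where "E i k \<noteq> E j k" using nt unfolding twins_def by blast
    then show ?thesis using L[OF ij, of k] L[of j i k] ij by (cases "E i k") auto
  qed
  have F2: "D i j + D j i = 0" if "i \<noteq> j" "twins E i j" for i j
  proof -
    obtain k where k: "E i k" using nb by blast
    then have "E j k" using twE that(2) by blast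
    with k show ?thesis using off[OF that(1), of k] by (simp add: adj1)
  qed
  have F1': "twins E l k" if "D k l \<noteq> 0" for k l
    using F1[of k l] that twr tws by (cases "k = l") auto
  define cls where "cls l = twin_class E l" for l
  have cls_mem: "k \<in> cls l \<longleftrightarrow> twins E l k" for k l by (simp add: cls_def twin_class_def)
  have G: "(\<Sum>k\<in>cls l. D k l) = 2 * D v v" if "E v l" for v l
  proof -
    have "(\<Sum>x\<in>UNIV. adj E v x * D x l) = (\<Sum>x\<in>cls l. adj E v x * D x l)"
      by (rule sum.mono_neutral_right) (auto simp: cls_mem dest: F1')
    also have "\<dots> = (\<Sum>x\<in>cls l. D x l)"
    proof (rule sum.cong)
      fix x assume "x \<in> cls l"
      then have "twins E l x" by (simp add: cls_mem)
      then have "E x v" using twE sym that by blast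
      then show "adj E v x * D x l = D x l" using sym by (simp add: adj1)
    qed simp
    finally show ?thesis using der_diag[OF assms(4), of v l] that by (simp add: adj1)
  qed
  have skew: "(\<Sum>l\<in>cls a. \<Sum>k\<in>cls a. D k l) = (\<Sum>l\<in>cls a. D l l)" for a
  proof -
    let ?S = "(\<Sum>l\<in>cls a. \<Sum>k\<in>cls a. D k l)"
    have "?S + ?S = (\<Sum>l\<in>cls a. \<Sum>k\<in>cls a. D k l) + (\<Sum>l\<in>cls a. \<Sum>k\<in>cls a. D l k)"
      using sum.swap by metis
    also have "\<dots> = (\<Sum>l\<in>cls a. \<Sum>k\<in>cls a. D k l + D l k)"
      by (simp add: sum.distrib)
    also have "\<dots> = (\<Sum>l\<in>cls a. \<Sum>k\<in>cls a. (if k = l then 2 * D l l else 0))"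
    proof (intro sum.cong refl)
      fix l k assume "l \<in> cls a" "k \<in> cls a"
      then have "twins E k l" using cls_mem tws twt by blast
      then show "D k l + D l k = (if k = l then 2 * D l l else 0)"
        using F2[of k l] by auto
    qed
    also have "\<dots> = (\<Sum>l\<in>cls a. 2 * D l l)"
      by (intro sum.cong refl) (simp add: sum.delta)
    also have "\<dots> = (\<Sum>l\<in>cls a. D l l) + (\<Sum>l\<in>cls a. D l l)"
      by (simp add: sum.distrib[symmetric])
    finally show ?thesis by simp
  qed
  have dconst: "D a a = D b b" if "twins E a b" for a b
  proof -
    obtain v where "E a v" using nb by blast
    moreover then have "E b v" using twE that by blast
    ultimately show ?thesis using G[of a v] G[of b v] by simp
  qed
  have key: "D a a = 2 * D b b" if "E b a" for a b
  proof -
    have h1: "(\<Sum>l\<in>cls a. \<Sum>k\<in>cls l. D k l) = (\<Sum>l\<in>cls a. 2 * D b b)"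
    proof (rule sum.cong[OF refl])
      fix l assume "l \<in> cls a"
      then have "twins E a l" by (simp add: cls_mem)
      then have "E l b" using twE sym that by blast
      then show "(\<Sum>k\<in>cls l. D k l) = 2 * D b b" using G sym by blast
    qed
    have h2: "(\<Sum>l\<in>cls a. \<Sum>k\<in>cls l. D k l) = (\<Sum>l\<in>cls a. \<Sum>k\<in>cls a. D k l)"
    proof (rule sum.cong[OF refl])
      fix l assume "l \<in> cls a"
      then have "cls l = cls a" using cls_mem tws twt by blast
      then show "(\<Sum>k\<in>cls l. D k l) = (\<Sum>k\<in>cls a. D k l)" by simp
    qed
    have h3: "(\<Sum>l\<in>cls a. D l l) = (\<Sum>l\<in>cls a. D a a)"
      by (rule sum.cong[OF refl]) (simp add: cls_mem dconst)
    have "(\<Sum>l\<in>cls a. 2 * D b b) = (\<Sum>l\<in>cls a. D a a)"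
      using h1 h2 h3 skew[of a] by metis
    then have "of_nat (card (cls a)) * (2 * D b b) = of_nat (card (cls a)) * D a a"
      by (simp only: sum_constant)
    moreover have "card (cls a) \<noteq> 0"
      using twr[of a] cls_mem[of a a] by (auto simp: card_eq_0_iff)
    ultimately show ?thesis by auto
  qed
  have diag: "D a a = 0" for a
  proof -
    obtain b where "E a b" using nb by blast
    then have "D b b = 2 * D a a" "D a a = 2 * D b b" using key sym by blast+
    then show ?thesis by simp
  qed
  have c0: "(\<Sum>k\<in>cls l. D k l) = 0" for l
  proof -
    obtain v where "E l v" using nb by blast
    then have "E v l" using sym by blast
    then show ?thesis using G[of v l] diag[of v] by simp
  qed
  have part2: "D i j = 0" if "i \<noteq> j" "\<not> (\<exists>T\<in>Gamma3 E. i \<in> T \<and> j \<in> T)" for i j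
  proof (cases "twins E i j")
    case False then show ?thesis using F1 that by blast
  next
    case True
    have ij: "i \<in> cls j" "j \<in> cls j" using True tws twr cls_mem by blast+
    have "\<not> card (cls j) \<ge> 3"
    proof
      assume "card (cls j) \<ge> 3"
      then have "cls j \<in> Gamma3 E" unfolding Gamma3_def cls_def by blast
      with ij that(2) show False by blast
    qed
    then have n3: "\<not> card (cls j) \<ge> 3" .
    have "cls j = {i, j}"
    proof (rule ccontr)
      assume "cls j \<noteq> {i, j}"
      then obtain x where x: "x \<in> cls j" "x \<noteq> i" "x \<noteq> j" using ij by blast
      then have "card {i, j, x} \<le> card (cls j)" using ij by (intro card_mono) auto
      moreover have "card {i, j, x} = 3" using that(1) x by simp
      ultimately show False using n3 by simp
    qed
    then show ?thesis using c0[of j] diag[of j] that(1) by simp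
  qed
  have part3: "\<forall>T\<in>Gamma3 E. \<forall>i\<in>T. \<forall>j\<in>T. i \<noteq> j \<longrightarrow> D i j = - D j i"
  proof (intro ballI impI)
    fix T i j assume "T \<in> Gamma3 E" "i \<in> T" "j \<in> T" "i \<noteq> j"
    then obtain x where "T = twin_class E x" unfolding Gamma3_def by blast
    then have "twins E x i" "twins E x j" using \<open>i \<in> T\<close> \<open>j \<in> T\<close> by (auto simp: twin_class_def)
    then have "twins E i j" by (simp add: twins_def)
    then show "D i j = - D j i" using F2 \<open>i \<noteq> j\<close> by (simp add: eq_neg_iff_add_eq_0)
  qed
  have part4: "\<forall>T\<in>Gamma3 E. \<forall>i\<in>T. (\<Sum>k\<in>T. D k i) = 0"
  proof (intro ballI)
    fix T i assume "T \<in> Gamma3 E" "i \<in> T"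
    then obtain x where x: "T = twin_class E x" unfolding Gamma3_def by blast
    then have "twins E x i" using \<open>i \<in> T\<close> by (simp add: twin_class_def)
    then have "T = cls i" using x unfolding cls_def twin_class_def twins_def by simp
    then show "(\<Sum>k\<in>T. D k i) = 0" using c0 by simp
  qed
  show ?thesis using diag part2 part3 part4 by blast
qed

end
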